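(* Let $(Q,\rightarrow)$ be a finite transition system and $\mathscr{R}$ a preorder on $Q$. Then $\rightarrow^{-1}\subseteq \rightarrow_{\mathscr{R}}^{-1}\circ\mathscr{R}$ and $\rightarrow^{-1}\circ\mathscr{R}=\rightarrow_{\mathscr{R}}^{-1}\circ\mathscr{R}$. Explicitly: for every transition $q\rightarrow q'$ there is $q''$ with $q'\,\mathscr{R}\,q''$ and $q\rightarrow_{\mathscr{R}} q''$; and for all $x,y\in Q$, there exists $z$ with $x\,\mathscr{R}\,z$ and $y\rightarrow z$ iff there exists $z$ with $x\,\mathscr{R}\,z$ and $y\rightarrow_{\mathscr{R}} z$.
   Context: A finite transition system is a pair $(Q,\rightarrow)$ with $Q$ a finite set and $\rightarrow\subseteq Q\times Q$. For relations $\mathscr{R},\mathscr{S}$ on $Q$, $\mathscr{R}(q)=\{q'\mid q\,\mathscr{R}\,q'\}$, $\mathscr{R}(X)=\bigcup_{q\in X}\mathscr{R}(q)$, $\mathscr{R}^{-1}=\{(y,x)\mid (x,y)\in\mathscr{R}\}$, and the composition is $\mathscr{S}\circ\mathscr{R}=\{(x,y)\mid y\in\mathscr{S}(\mathscr{R}(x))\}$ (first $\mathscr{R}$, then $\mathscr{S}$). A preorder is a reflexive transitive relation; $[q]_{\mathscr{R}}=\{q'\mid q\,\mathscr{R}\,q'\wedge q'\,\mathscr{R}\,q\}$. A transition $q\rightarrow q'$ is $\mathscr{R}$-maximal, written $q\rightarrow_{\mathscr{R}}q'$, if for all $q''\in Q$, ($q\rightarrow q''$ and $q'\,\mathscr{R}\,q''$)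 implies $q''\in[q']_{\mathscr{R}}$; $\rightarrow_{\mathscr{R}}$ also denotes the relation formed by these transitions. *)

theory Defs
  imports Main
begin

text \<open>A finite transition system is modelled by a finite type 'q (the state set Q = UNIV)
  together with a transition relation T :: 'q rel.\<close>

definition eq_class :: "'q rel \<Rightarrow> 'q \<Rightarrow> 'q set" where
  "eq_class R q = {q'. (q, q') \<in> R \<and> (q', q) \<in> R}"

definition max_trans :: "'q rel \<Rightarrow> 'q rel \<Rightarrow> 'q rel" where
  "max_trans T R = {(q, q'). (q, q') \<in> T \<and>
     (\<forall>q''. (q, q'') \<in> T \<and> (q', q'') \<in> R \<longrightarrow> q'' \<in> eq_class R q')}"

end

theory Submission
  imports Defs
begin

lemma key:
  fixes T R :: "('q::finite) rel"
  assumes r: "refl R" and t: "trans R" and qq: "(q, q') \<in> T"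
  shows "\<exists>q''. (q', q'') \<in> R \<and> (q, q'') \<in> max_trans T R"
proof -
  let ?P = "\<lambda>z. (q, z) \<in> T \<and> (q', z) \<in> R"
  have "?P q'" using qq r by (auto simp: refl_on_def)
  then obtain z where z: "?P z" and mn: "\<And>y. ?P y \<Longrightarrow> card {w. (z,w)\<in>R} \<le> card {w. (y,w)\<in>R}"
    using ex_has_least_nat[of ?P q' "\<lambda>z. card {w. (z,w)\<in>R}"] by blast
  have "(q, z) \<in> max_trans T R"
  proof -
    { fix z'' assume a: "(q, z'') \<in> T" "(z, z'') \<in> R"
      have "(z'', z) \<in> R"
      proof (rule ccontr)
        assume n: "(z'', z) \<notin> R"
        have P: "?P z''" using a z transD[OF t] by blast
        have "{w. (z'',w)\<in>R} \<subset> {w. (z,w)\<in>R}"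
        proof
          show "{w. (z'',w)\<in>R} \<subseteq> {w. (z,w)\<in>R}" using a(2) transD[OF t] by blast
          show "{w. (z'',w)\<in>R} \<noteq> {w. (z,w)\<in>R}" using n r by (auto simp: refl_on_def)
        qed
        hence "card {w. (z'',w)\<in>R} < card {w. (z,w)\<in>R}" by (simp add: psubset_card_mono)
        with mn[OF P] show False by simp
      qed
      hence "z'' \<in> eq_class R z" using a by (simp add: eq_class_def) }
    thus ?thesis using z by (auto simp: max_trans_def)
  qed
  thus ?thesis using z by blast
qed

theorem lemma1:
  fixes T R :: "('q::finite) rel"
  assumes "refl R" and "trans R"
  shows "converse T \<subseteq> R O converse (max_trans T R)
    \<and> R O converse T = R O converse (max_trans T R)
    \<and> (\<forall>q q'. (q, q') \<in> T \<longrightarrow> (\<exists>q''. (q', q'') \<in> R \<and> (q, q'') \<in> max_trans T R))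
    \<and> (\<forall>x y. (\<exists>z. (x, z) \<in> R \<and> (y, z) \<in> T) \<longleftrightarrow> (\<exists>z. (x, z) \<in> R \<and> (y, z) \<in> max_trans T R))"
proof -
  have K: "\<And>q q'. (q, q') \<in> T \<Longrightarrow> \<exists>q''. (q', q'') \<in> R \<and> (q, q'') \<in> max_trans T R"
    using key[OF assms] by blast
  have M: "max_trans T R \<subseteq> T" by (auto simp: max_trans_def)
  have E: "\<And>x y. (\<exists>z. (x, z) \<in> R \<and> (y, z) \<in> T) \<longleftrightarrow> (\<exists>z. (x, z) \<in> R \<and> (y, z) \<in> max_trans T R)"
  proof
    fix x y assume "\<exists>z. (x, z) \<in> R \<and> (y, z) \<in> T"
    then obtain z where "(x, z) \<in> R" "(y, z) \<in> T" by blast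
    with K obtain w where "(z, w) \<in> R" "(y, w) \<in> max_trans T R" by blast
    thus "\<exists>z. (x, z) \<in> R \<and> (y, z) \<in> max_trans T R" using \<open>(x, z) \<in> R\<close> transD[OF assms(2)]
      by blast
  next
    fix x y assume "\<exists>z. (x, z) \<in> R \<and> (y, z) \<in> max_trans T R"
    thus "\<exists>z. (x, z) \<in> R \<and> (y, z) \<in> T" using M by blast
  qed
  have A: "converse T \<subseteq> R O converse (max_trans T R)"
  proof
    fix p assume "p \<in> converse T"
    then obtain a b where p: "p = (b, a)" "(a, b) \<in> T" by auto
    with K obtain c where "(b, c) \<in> R" "(a, c) \<in> max_trans T R" by blast
    thus "p \<in> R O converse (max_trans T R)" using p by auto
  qed
  have B: "R O converse T = R O converse (max_trans T R)"
  proof (rule set_eqI)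
    fix p :: "'q \<times> 'q"
    obtain x y where p: "p = (x, y)" by fastforce
    show "p \<in> R O converse T \<longleftrightarrow> p \<in> R O converse (max_trans T R)"
      unfolding p relcomp_unfold converse_iff using E[of x y] by simp
  qed
  show ?thesis using A B K E by (intro conjI allI impI) auto
qed

end
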